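(* Let $\partial(X)$ be a tight cut of a connected bipartite cubic graph $H[A,B]$, with notation chosen so that $X^+\subseteq B$, and let $H_1:=H/\overline{X}\rightarrow\overline{x}$ and $H_2:=H/X\rightarrow x$. Then: (i) for every $a\in X^-$ and $b\in\overline{X}^-$, the pair $(a,b)$ is not $\lambda$-matchable in $H$; (ii) for every $a\in X^-$ and $b\in X^+$, $(a,b)$ is $\lambda$-matchable in $H$ if and only if it is $\lambda$-matchable in $H_1$; (iii) for every $a\in\overline{X}^+$ and $b\in X^+$, $(a,b)$ is $\lambda$-matchable in $H$ if and only if $(\overline{x},b)$ is $\lambda$-matchable in $H_1$ and $(a,x)$ is $\lambda$-matchable in $H_2$.
   Context: Graphs are loopless but may have parallel edges. A cut $C$ of a matching covered graph is tight if $|C\cap M|=1$ for every perfect matching $M$; tight cuts are odd. For an odd cut $\partial(X)$ of a bipartite graph $H[A,B]$, $X^+$ and $X^-$ denote the larger and smaller of $X\cap A$ and $X\cap B$, and $\overline{X}^+,\overline{X}^-$ are defined analogously for $\overline{X}=V(H)-X$ (so with $X^+\subseteq B$ one has $X^-\subseteq A$, $\overline{X}^+\subseteq A$, $\overline{X}^-\subseteq B$). $H/\overline{X}\rightarrow\overline{x}$ denotes $H$ with $\overline{X}$ shrunk to a vertex $\overline{x}$ (similarly $H/X\rightarrow x$); these contractions are bipartite cubic, with $\overline{x}$ in the class of $A$ and $x$ in the class of $B$. For a connected bipartite cubic graph and vertices $a,b$ in different color classes, an $(a,b)$-matching is a spanning subgraph with $a,b$ of degree $3$ and all other vertices of degree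 $1$; $(a,b)$ is $\lambda$-matchable if one exists. *)

theory Defs
  imports Main
begin

text \<open>Finite loopless multigraphs: an edge e has endpoint set ends e of size 2
  (parallel edges = distinct edges with the same endpoint set).\<close>

record ('v, 'e) mgraph =
  verts :: "'v set"
  edges :: "'e set"
  ends  :: "'e \<Rightarrow> 'v set"

definition multigraph :: "('v, 'e) mgraph \<Rightarrow> bool" where
  "multigraph G \<longleftrightarrow> finite (verts G) \<and> finite (edges G) \<and>
     (\<forall>e\<in>edges G. ends G e \<subseteq> verts G \<and> card (ends G e) = 2)"

definition deg :: "('v, 'e) mgraph \<Rightarrow> 'e set \<Rightarrow> 'v \<Rightarrow> nat" where
  "deg G F v = card {e \<in> F. v \<in> ends G e}"

definition cubic :: "('v, 'e) mgraph \<Rightarrow> bool" where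
  "cubic G \<longleftrightarrow> (\<forall>v\<in>verts G. deg G (edges G) v = 3)"

definition adjacent :: "('v, 'e) mgraph \<Rightarrow> 'v \<Rightarrow> 'v \<Rightarrow> bool" where
  "adjacent G u v \<longleftrightarrow> (\<exists>e\<in>edges G. ends G e = {u, v})"

definition connected_graph :: "('v, 'e) mgraph \<Rightarrow> bool" where
  "connected_graph G \<longleftrightarrow> (\<forall>u\<in>verts G. \<forall>v\<in>verts G. (adjacent G)\<^sup>*\<^sup>* u v)"

definition bipartite_on :: "('v, 'e) mgraph \<Rightarrow> 'v set \<Rightarrow> 'v set \<Rightarrow> bool" where
  "bipartite_on G A B \<longleftrightarrow> A \<union> B = verts G \<and> A \<inter> B = {} \<and>
     (\<forall>e\<in>edges G. \<exists>a\<in>A. \<exists>b\<in>B. ends G e = {a, b})"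

definition cut :: "('v, 'e) mgraph \<Rightarrow> 'v set \<Rightarrow> 'e set" where
  "cut G X = {e \<in> edges G. card (ends G e \<inter> X) = 1}"

definition perfect_matching :: "('v, 'e) mgraph \<Rightarrow> 'e set \<Rightarrow> bool" where
  "perfect_matching G M \<longleftrightarrow> M \<subseteq> edges G \<and> (\<forall>v\<in>verts G. deg G M v = 1)"

definition tight_cut :: "('v, 'e) mgraph \<Rightarrow> 'v set \<Rightarrow> bool" where
  "tight_cut G X \<longleftrightarrow> X \<subseteq> verts G \<and>
     (\<forall>M. perfect_matching G M \<longrightarrow> card (cut G X \<inter> M) = 1)"

definition lambda_matching :: "('v, 'e) mgraph \<Rightarrow> 'v \<Rightarrow> 'v \<Rightarrow> 'e set \<Rightarrow> bool" where
  "lambda_matching G a b F \<longleftrightarrow> F \<subseteq> edges G \<and> deg G F a = 3 \<and> deg G F b = 3 \<and>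
     (\<forall>v\<in>verts G - {a, b}. deg G F v = 1)"

definition lambda_matchable :: "('v, 'e) mgraph \<Rightarrow> 'v \<Rightarrow> 'v \<Rightarrow> bool" where
  "lambda_matchable G a b \<longleftrightarrow> (\<exists>F. lambda_matching G a b F)"

text \<open>G/S \<rightarrow> s: shrink S to a single new vertex, represented as None; the other
  vertices v become Some v. Edges inside S are deleted, the others are kept
  (so parallel edges may arise).\<close>
definition shrink :: "('v, 'e) mgraph \<Rightarrow> 'v set \<Rightarrow> ('v option, 'e) mgraph" where
  "shrink G S = \<lparr> verts = Some ` (verts G - S) \<union> {None},
                  edges = {e \<in> edges G. \<not> ends G e \<subseteq> S},
                  ends = (\<lambda>e. (\<lambda>v. if v \<in> S then None else Some v) ` ends G e) \<rparr>"

end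

theory Submission
  imports Defs
begin


lemma hall:
  fixes N :: "'a \<Rightarrow> 'b set"
  assumes "finite A" "\<forall>x\<in>A. finite (N x)" "\<forall>S\<subseteq>A. card S \<le> card (\<Union>(N ` S))"
  shows "\<exists>f. inj_on f A \<and> (\<forall>x\<in>A. f x \<in> N x)"
  using assms
proof (induction "card A" arbitrary: A N rule: less_induct)
  case less
  show ?case
  proof (cases "A = {}")
    case True then show ?thesis by auto
  next
    case ne: False
    show ?thesis
    proof (cases "\<exists>S. S \<noteq> {} \<and> S \<subset> A \<and> card (\<Union>(N ` S)) \<le> card S")
      case nS: False
      obtain a where aA: "a \<in> A" using ne by auto
      have "card {a} \<le> card (\<Union>(N ` {a}))" using less.prems(3) aA by blast
      then have "N a \<noteq> {}" by auto
      then obtain b where bN: "b \<in> N a" by auto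
      define A' where "A' = A - {a}"
      define N' where "N' = (\<lambda>x. N x - {b})"
      have cA': "card A' < card A" unfolding A'_def using aA less.prems(1)
        by (meson card_Diff1_less)
      have hall': "\<forall>S\<subseteq>A'. card S \<le> card (\<Union>(N' ` S))"
      proof (intro allI impI)
        fix S assume SA: "S \<subseteq> A'"
        show "card S \<le> card (\<Union>(N' ` S))"
        proof (cases "S = {}")
          case True then show ?thesis by simp
        next
          case False
          have "S \<subset> A" using SA aA unfolding A'_def by auto
          then have lt: "card S < card (\<Union>(N ` S))" using False nS by (meson not_le)
          have fin: "finite (\<Union>(N ` S))" using SA less.prems(1,2) unfolding A'_def
            by (meson Diff_subset finite_UN_I finite_subset subset_eq)
          have eq: "\<Union>(N' ` S) = \<Union>(N ` S) - {b}" unfolding N'_def by auto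
          have "card (\<Union>(N ` S)) - 1 \<le> card (\<Union>(N ` S) - {b})"
            by (simp add: card_Diff_singleton_if)
          then show ?thesis using lt eq by simp
        qed
      qed
      have "finite A'" using less.prems(1) unfolding A'_def by auto
      moreover have "\<forall>x\<in>A'. finite (N' x)" using less.prems(2) unfolding A'_def N'_def by auto
      ultimately have "\<exists>f. inj_on f A' \<and> (\<forall>x\<in>A'. f x \<in> N' x)"
        by (intro less.hyps[OF cA' _ _ hall'])
      then obtain f' where f': "inj_on f' A'" "\<forall>x\<in>A'. f' x \<in> N' x" by blast
      define f where "f = f'(a := b)"
      have "inj_on f A'"
      proof (rule inj_on_cong[THEN iffD1, OF _ f'(1)])
        fix x assume "x \<in> A'" then show "f' x = f x" unfolding f_def A'_def by auto
      qed
      moreover have "f a \<notin> f ` A'"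
      proof
        assume "f a \<in> f ` A'"
        then obtain x where "x \<in> A'" "f x = b" unfolding f_def by auto
        moreover have "x \<noteq> a" using \<open>x \<in> A'\<close> unfolding A'_def by auto
        ultimately show False using f'(2) unfolding f_def N'_def by auto
      qed
      moreover have "a \<notin> A'" unfolding A'_def by auto
      ultimately have ins: "inj_on f (insert a A')" by (simp add: inj_on_insert)
      have "A = insert a A'" using aA unfolding A'_def by auto
      with ins have "inj_on f A" by simp
      moreover have "\<forall>x\<in>A. f x \<in> N x" using f'(2) bN unfolding f_def N'_def A'_def by auto
      ultimately show ?thesis by blast
    next
      case True
      then obtain S where S: "S \<noteq> {}" "S \<subset> A" "card (\<Union>(N ` S)) \<le> card S" by blast
      have cS: "card S < card A" using S(2) less.prems(1) by (simp add: psubset_card_mono)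
      have "finite S" using S(2) less.prems(1) finite_subset by auto
      moreover have "\<forall>x\<in>S. finite (N x)" using S(2) less.prems(2) by auto
      moreover have "\<forall>T\<subseteq>S. card T \<le> card (\<Union>(N ` T))" using S(2) less.prems(3) by auto
      ultimately have "\<exists>f. inj_on f S \<and> (\<forall>x\<in>S. f x \<in> N x)"
        by (intro less.hyps[OF cS])
      then obtain f1 where f1: "inj_on f1 S" "\<forall>x\<in>S. f1 x \<in> N x" by blast
      define NS where "NS = \<Union>(N ` S)"
      define A2 where "A2 = A - S"
      define N2 where "N2 = (\<lambda>x. N x - NS)"
      have cA2: "card A2 < card A"
      proof -
        have "finite S" using S(2) less.prems(1) finite_subset by auto
        then have "card S > 0" using S(1) by auto
        moreover have "card A2 = card A - card S" unfolding A2_def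
          using S(2) \<open>finite S\<close> by (simp add: card_Diff_subset)
        moreover have "card S \<le> card A" using cS by simp
        ultimately show ?thesis by linarith
      qed
      have finNS: "finite NS" unfolding NS_def using \<open>finite S\<close> \<open>\<forall>x\<in>S. finite (N x)\<close> by auto
      have hall2: "\<forall>T\<subseteq>A2. card T \<le> card (\<Union>(N2 ` T))"
      proof (intro allI impI)
        fix T assume TA: "T \<subseteq> A2"
        have finT: "finite T" using TA less.prems(1) unfolding A2_def using finite_subset by blast
        have "T \<union> S \<subseteq> A" using TA S(2) unfolding A2_def by auto
        then have h: "card (T \<union> S) \<le> card (\<Union>(N ` (T \<union> S)))" using less.prems(3) by blast
        have "card (T \<union> S) = card T + card S" using TA finT \<open>finite S\<close> unfolding A2_def
          by (subst card_Un_disjoint) auto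
        moreover have "\<Union>(N ` (T \<union> S)) = \<Union>(N2 ` T) \<union> NS" unfolding N2_def NS_def by auto
        moreover have "finite (\<Union>(N2 ` T))" using finT TA less.prems(2) unfolding N2_def A2_def by auto
        moreover have "card (\<Union>(N2 ` T) \<union> NS) = card (\<Union>(N2 ` T)) + card NS"
          using finNS \<open>finite (\<Union>(N2 ` T))\<close> unfolding N2_def by (subst card_Un_disjoint) auto
        ultimately have "card T + card S \<le> card (\<Union>(N2 ` T)) + card NS" using h by simp
        then show "card T \<le> card (\<Union>(N2 ` T))" using S(3) unfolding NS_def by linarith
      qed
      have "finite A2" using less.prems(1) unfolding A2_def by auto
      moreover have "\<forall>x\<in>A2. finite (N2 x)" using less.prems(2) unfolding A2_def N2_def by auto
      ultimately have "\<exists>f. inj_on f A2 \<and> (\<forall>x\<in>A2. f x \<in> N2 x)"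
        by (intro less.hyps[OF cA2 _ _ hall2])
      then obtain f2 where f2: "inj_on f2 A2" "\<forall>x\<in>A2. f2 x \<in> N2 x" by blast
      define f where "f = (\<lambda>x. if x \<in> S then f1 x else f2 x)"
      have "inj_on f A"
        unfolding inj_on_def
      proof (intro ballI impI)
        fix x y assume xy: "x \<in> A" "y \<in> A" "f x = f y"
        have img1: "\<And>z. z \<in> S \<Longrightarrow> f1 z \<in> NS" using f1(2) unfolding NS_def by auto
        have img2: "\<And>z. z \<in> A2 \<Longrightarrow> f2 z \<notin> NS" using f2(2) unfolding N2_def by auto
        show "x = y"
          using xy f1(1) f2(1) img1 img2 unfolding f_def A2_def inj_on_def
          by (metis DiffI)
      qed
      moreover have "\<forall>x\<in>A. f x \<in> N x" using f1(2) f2(2) unfolding f_def A2_def N2_def by auto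
      ultimately show ?thesis by blast
    qed
  qed
qed




locale cb =
  fixes H :: "('v, 'e) mgraph" and A B :: "'v set"
  assumes mg: "multigraph H" and cub: "cubic H" and bip: "bipartite_on H A B"
begin

definition aend where "aend e = (SOME a. a \<in> A \<and> a \<in> ends H e)"
definition bend where "bend e = (SOME b. b \<in> B \<and> b \<in> ends H e)"

lemma AB: "A \<union> B = verts H" "A \<inter> B = {}" using bip unfolding bipartite_on_def by auto

lemma fin: "finite (verts H)" "finite (edges H)" "finite A" "finite B"
  using mg AB(1) unfolding multigraph_def by (auto intro: finite_subset)

lemma ab_ends:
  assumes "e \<in> edges H"
  shows "aend e \<in> A" "bend e \<in> B" "ends H e = {aend e, bend e}"
proof -
  obtain a b where ab: "a \<in> A" "b \<in> B" "ends H e = {a, b}"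
    using bip assms unfolding bipartite_on_def by blast
  have "aend e = a" unfolding aend_def
    by (rule some_equality) (use ab AB(2) in auto)
  moreover have "bend e = b" unfolding bend_def
    by (rule some_equality) (use ab AB(2) in auto)
  ultimately show "aend e \<in> A" "bend e \<in> B" "ends H e = {aend e, bend e}" using ab by auto
qed

lemma memA: "e \<in> edges H \<Longrightarrow> v \<in> A \<Longrightarrow> v \<in> ends H e \<longleftrightarrow> v = aend e"
  using ab_ends[of e] AB(2) by auto
lemma memB: "e \<in> edges H \<Longrightarrow> v \<in> B \<Longrightarrow> v \<in> ends H e \<longleftrightarrow> v = bend e"
  using ab_ends[of e] AB(2) by auto

lemma degA: "F \<subseteq> edges H \<Longrightarrow> v \<in> A \<Longrightarrow> deg H F v = card {e\<in>F. aend e = v}"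
  unfolding deg_def by (rule arg_cong[where f=card]) (use memA in blast)
lemma degB: "F \<subseteq> edges H \<Longrightarrow> v \<in> B \<Longrightarrow> deg H F v = card {e\<in>F. bend e = v}"
  unfolding deg_def by (rule arg_cong[where f=card]) (use memB in blast)

lemma sumA:
  assumes "F \<subseteq> edges H" "P \<subseteq> A"
  shows "(\<Sum>v\<in>P. deg H F v) = card {e\<in>F. aend e \<in> P}"
proof -
  have fP: "finite P" using assms(2) fin(3) finite_subset by auto
  have fF: "finite F" using assms(1) fin(2) finite_subset by auto
  have "(\<Sum>v\<in>P. deg H F v) = (\<Sum>v\<in>P. card {e\<in>F. aend e = v})"
    using assms degA by (intro sum.cong) auto
  also have "\<dots> = card (\<Union>v\<in>P. {e\<in>F. aend e = v})"
    using fP fF by (subst card_UN_disjoint) auto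
  also have "(\<Union>v\<in>P. {e\<in>F. aend e = v}) = {e\<in>F. aend e \<in> P}" by auto
  finally show ?thesis .
qed

lemma sumB:
  assumes "F \<subseteq> edges H" "P \<subseteq> B"
  shows "(\<Sum>v\<in>P. deg H F v) = card {e\<in>F. bend e \<in> P}"
proof -
  have fP: "finite P" using assms(2) fin(4) finite_subset by auto
  have fF: "finite F" using assms(1) fin(2) finite_subset by auto
  have "(\<Sum>v\<in>P. deg H F v) = (\<Sum>v\<in>P. card {e\<in>F. bend e = v})"
    using assms degB by (intro sum.cong) auto
  also have "\<dots> = card (\<Union>v\<in>P. {e\<in>F. bend e = v})"
    using fP fF by (subst card_UN_disjoint) auto
  also have "(\<Union>v\<in>P. {e\<in>F. bend e = v}) = {e\<in>F. bend e \<in> P}" by auto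
  finally show ?thesis .
qed

lemma deg3: "v \<in> verts H \<Longrightarrow> deg H (edges H) v = 3"
  using cub unfolding cubic_def by auto

lemma cardA3: "P \<subseteq> A \<Longrightarrow> card {e\<in>edges H. aend e \<in> P} = 3 * card P"
proof -
  assume P: "P \<subseteq> A"
  have "(\<Sum>v\<in>P. deg H (edges H) v) = (\<Sum>v\<in>P. 3)"
    using P deg3 AB(1) by (intro sum.cong) auto
  then show ?thesis using sumA[of "edges H" P] P by simp
qed
lemma cardB3: "P \<subseteq> B \<Longrightarrow> card {e\<in>edges H. bend e \<in> P} = 3 * card P"
proof -
  assume P: "P \<subseteq> B"
  have "(\<Sum>v\<in>P. deg H (edges H) v) = (\<Sum>v\<in>P. 3)"
    using P deg3 AB(1) by (intro sum.cong) auto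
  then show ?thesis using sumB[of "edges H" P] P by simp
qed

lemma cardAB: "card A = card B"
proof -
  have "3 * card A = card (edges H)" using cardA3[of A] ab_ends
    by (metis (mono_tags, lifting) Collect_cong mem_Collect_eq order_refl set_eq_iff)
  moreover have "3 * card B = card (edges H)" using cardB3[of B] ab_ends
    by (metis (mono_tags, lifting) Collect_cong mem_Collect_eq order_refl set_eq_iff)
  ultimately show ?thesis by simp
qed

end



context cb begin

lemma edge_in_pm:
  assumes e0: "e0 \<in> edges H"
  shows "\<exists>M. perfect_matching H M \<and> e0 \<in> M"
proof -
  define u where "u = aend e0"
  define v where "v = bend e0"
  have uA: "u \<in> A" and vB: "v \<in> B" using ab_ends[OF e0] unfolding u_def v_def by auto
  define A' where "A' = A - {u}"
  define NB where "NB = (\<lambda>x. {bend e | e. e \<in> edges H \<and> aend e = x})"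
  define N where "N = (\<lambda>x. NB x - {v})"
  have NBB: "\<And>x. NB x \<subseteq> B" unfolding NB_def using ab_ends by auto
  have hallc: "\<forall>S\<subseteq>A'. card S \<le> card (\<Union>(N ` S))"
  proof (intro allI impI)
    fix S assume SA': "S \<subseteq> A'"
    then have SA: "S \<subseteq> A" unfolding A'_def by auto
    define T where "T = \<Union>(NB ` S)"
    have TB: "T \<subseteq> B" unfolding T_def using NBB by auto
    have fT: "finite T" using TB fin(4) finite_subset by auto
    define ES where "ES = {e\<in>edges H. aend e \<in> S}"
    define ET where "ET = {e\<in>edges H. bend e \<in> T}"
    have cES: "card ES = 3 * card S" unfolding ES_def using cardA3 SA by auto
    have cET: "card ET = 3 * card T" unfolding ET_def using cardB3 TB by auto
    have sub: "ES \<subseteq> ET" unfolding ES_def ET_def T_def NB_def by auto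
    have fET: "finite ET" unfolding ET_def using fin(2) by auto
    have le: "card S \<le> card T" using card_mono[OF fET sub] cES cET by simp
    have eqN: "\<Union>(N ` S) = T - {v}" unfolding N_def T_def by auto
    show "card S \<le> card (\<Union>(N ` S))"
    proof (cases "v \<in> T")
      case False then show ?thesis using eqN le by simp
    next
      case True
      have "card S \<noteq> card T"
      proof
        assume "card S = card T"
        then have "card ES = card ET" using cES cET by simp
        then have "ES = ET" using card_subset_eq[OF fET sub] by simp
        moreover have "e0 \<in> ET" unfolding ET_def using e0 True v_def by simp
        moreover have "e0 \<notin> ES" unfolding ES_def using SA' u_def A'_def by auto
        ultimately show False by simp
      qed
      then have "card S < card T" using le by simp
      then show ?thesis using eqN True fT by simp
    qed
  qed
  have "finite A'" unfolding A'_def using fin(3) by simp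
  moreover have "\<forall>x\<in>A'. finite (N x)" unfolding N_def using NBB fin(4)
    by (auto intro: finite_subset)
  ultimately have "\<exists>f. inj_on f A' \<and> (\<forall>x\<in>A'. f x \<in> N x)"
    using hallc by (intro hall)
  then obtain f where f: "inj_on f A'" "\<forall>x\<in>A'. f x \<in> N x" by (elim exE conjE)
  have fex: "\<forall>x\<in>A'. \<exists>e. e \<in> edges H \<and> aend e = x \<and> bend e = f x"
  proof
    fix x assume "x \<in> A'"
    then have "f x \<in> NB x" using f(2) unfolding N_def by blast
    then obtain e where "f x = bend e" "e \<in> edges H" "aend e = x" unfolding NB_def by blast
    then show "\<exists>e. e \<in> edges H \<and> aend e = x \<and> bend e = f x" by metis
  qed
  define g where "g = (\<lambda>x. SOME e. e \<in> edges H \<and> aend e = x \<and> bend e = f x)"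
  have g: "g x \<in> edges H \<and> aend (g x) = x \<and> bend (g x) = f x" if "x \<in> A'" for x
    unfolding g_def by (rule someI_ex[OF fex[rule_format, OF that]])
  have fB: "\<And>x. x \<in> A' \<Longrightarrow> f x \<in> B - {v}" using f(2) NBB unfolding N_def by blast
  have img: "f ` A' = B - {v}"
  proof (rule card_subset_eq)
    show "finite (B - {v})" using fin(4) by simp
    show "f ` A' \<subseteq> B - {v}" using fB by auto
    have "card (f ` A') = card A'" using f(1) by (simp add: card_image)
    also have "\<dots> = card A - 1" unfolding A'_def using uA fin(3) by simp
    also have "\<dots> = card (B - {v})" using cardAB vB fin(4) by simp
    finally show "card (f ` A') = card (B - {v})" .
  qed
  define M where "M = insert e0 (g ` A')"
  have ME: "M \<subseteq> edges H" unfolding M_def using e0 g by auto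
  have "\<forall>w\<in>verts H. deg H M w = 1"
  proof
    fix w assume w: "w \<in> verts H"
    show "deg H M w = 1"
    proof (cases "w \<in> A")
      case True
      have "{e\<in>M. aend e = w} = (if w = u then {e0} else {g w})"
        unfolding M_def using g u_def A'_def True by force
      then show ?thesis using degA[OF ME True] by simp
    next
      case False
      then have wB: "w \<in> B" using w AB(1) by auto
      show ?thesis
      proof (cases "w = v")
        case True
        have "{e\<in>M. bend e = w} = {e0}"
          unfolding M_def using g fB True v_def by force
        then show ?thesis using degB[OF ME wB] by simp
      next
        case False
        then obtain x where x: "x \<in> A'" "f x = w" using img wB by (metis DiffI imageE singletonD)
        have "{e\<in>M. bend e = w} = {g x}"
        proof
          show "{g x} \<subseteq> {e\<in>M. bend e = w}" using x g unfolding M_def by auto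
          show "{e\<in>M. bend e = w} \<subseteq> {g x}"
          proof
            fix e assume "e \<in> {e\<in>M. bend e = w}"
            then have eM: "e \<in> M" "bend e = w" by auto
            show "e \<in> {g x}"
            proof (cases "e = e0")
              case True then show ?thesis using eM False v_def by simp
            next
              case False
              then obtain y where "y \<in> A'" "e = g y" using eM unfolding M_def by auto
              then have "f y = f x" using g eM x by auto
              then have "y = x" using f(1) \<open>y \<in> A'\<close> x(1) by (meson inj_onD)
              then show ?thesis using \<open>e = g y\<close> by simp
            qed
          qed
        qed
        then show ?thesis using degB[OF ME wB] by simp
      qed
    qed
  qed
  then have "perfect_matching H M" using ME unfolding perfect_matching_def by simp
  moreover have "e0 \<in> M" unfolding M_def by simp
  ultimately show ?thesis by blast
qed

end



lemma shrink_simps: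
  "verts (shrink H S) = Some ` (verts H - S) \<union> {None}"
  "edges (shrink H S) = {e \<in> edges H. \<not> ends H e \<subseteq> S}"
  "ends (shrink H S) e = (\<lambda>v. if v \<in> S then None else Some v) ` ends H e"
  by (simp_all add: shrink_def)

lemma deg_shrink_Some: "v \<notin> S \<Longrightarrow> deg (shrink H S) F (Some v) = deg H F v"
  unfolding deg_def shrink_simps
  by (rule arg_cong[where f=card]) (auto split: if_splits)

lemma deg_shrink_None: "deg (shrink H S) F None = card {e\<in>F. ends H e \<inter> S \<noteq> {}}"
  unfolding deg_def shrink_simps
  by (rule arg_cong[where f=card]) (auto split: if_splits)

lemma deg_restrict: "v \<notin> S \<Longrightarrow> F \<subseteq> edges H \<Longrightarrow> deg H (F \<inter> edges (shrink H S)) v = deg H F v"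
  unfolding deg_def shrink_simps
  by (rule arg_cong[where f=card]) auto

lemma sum_deg:
  fixes g :: "'a \<Rightarrow> nat"
  assumes "finite P" "\<forall>v\<in>P. v \<notin> {a, b} \<longrightarrow> g v = 1" "g a = 3" "g b = 3"
  shows "sum g P = card P + 2 * card (P \<inter> {a, b})"
proof -
  have "sum g P = sum g (P - {a, b}) + sum g (P \<inter> {a, b})"
    using assms(1) by (metis add.commute sum.Int_Diff)
  moreover have "sum g (P - {a, b}) = card (P - {a, b})" using assms(2) by simp
  moreover have "sum g (P \<inter> {a, b}) = 3 * card (P \<inter> {a, b})"
  proof -
    have "sum g (P \<inter> {a, b}) = sum (\<lambda>_. 3) (P \<inter> {a, b})" using assms(3,4) by (intro sum.cong) auto
    then show ?thesis by simp
  qed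
  moreover have "card P = card (P - {a, b}) + card (P \<inter> {a, b})"
    using assms(1) by (metis add.commute card_Int_Diff)
  ultimately show ?thesis by simp
qed

locale cbX = cb H A B for H :: "('v, 'e) mgraph" and A B +
  fixes X :: "'v set"
  assumes tight: "tight_cut H X" and lt: "card (X \<inter> A) < card (X \<inter> B)"
begin

definition Y where "Y = verts H - X"

lemma XV: "X \<subseteq> verts H" using tight unfolding tight_cut_def by auto

lemma ends_facts:
  assumes "e \<in> edges H"
  shows "ends H e \<subseteq> Y \<longleftrightarrow> aend e \<notin> X \<and> bend e \<notin> X"
    "ends H e \<inter> Y \<noteq> {} \<longleftrightarrow> aend e \<notin> X \<or> bend e \<notin> X"
    "ends H e \<subseteq> X \<longleftrightarrow> aend e \<in> X \<and> bend e \<in> X"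
    "ends H e \<inter> X \<noteq> {} \<longleftrightarrow> aend e \<in> X \<or> bend e \<in> X"
  using ab_ends[OF assms] AB(1) unfolding Y_def by auto

lemma cut_char0:
  assumes "e \<in> edges H"
  shows "e \<in> cut H X \<longleftrightarrow> (aend e \<in> X \<and> bend e \<notin> X) \<or> (aend e \<notin> X \<and> bend e \<in> X)"
proof -
  have ne: "aend e \<noteq> bend e" using ab_ends[OF assms] AB(2) by auto
  have "card (ends H e \<inter> X) = 1 \<longleftrightarrow> (aend e \<in> X \<and> bend e \<notin> X) \<or> (aend e \<notin> X \<and> bend e \<in> X)"
    unfolding ab_ends(3)[OF assms]
    using ne by (cases "aend e \<in> X"; cases "bend e \<in> X") (auto simp: Int_insert_left)
  then show ?thesis unfolding cut_def using assms by auto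
qed

lemma pm_facts:
  assumes "perfect_matching H M"
  shows "card (X \<inter> B) = card (X \<inter> A) + 1" "\<forall>e\<in>M. \<not> (aend e \<in> X \<and> bend e \<notin> X)"
proof -
  have ME: "M \<subseteq> edges H" using assms unfolding perfect_matching_def by auto
  have fM: "finite M" using ME fin(2) finite_subset by auto
  have d1: "\<And>v. v \<in> verts H \<Longrightarrow> deg H M v = 1" using assms unfolding perfect_matching_def by auto
  have sA: "(\<Sum>v\<in>X \<inter> A. deg H M v) = card (X \<inter> A)"
  proof -
    have "(\<Sum>v\<in>X \<inter> A. deg H M v) = (\<Sum>v\<in>X \<inter> A. 1)" using d1 XV by (intro sum.cong) auto
    then show ?thesis by simp
  qed
  have sB: "(\<Sum>v\<in>X \<inter> B. deg H M v) = card (X \<inter> B)"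
  proof -
    have "(\<Sum>v\<in>X \<inter> B. deg H M v) = (\<Sum>v\<in>X \<inter> B. 1)" using d1 XV by (intro sum.cong) auto
    then show ?thesis by simp
  qed
  define m0 where "m0 = {e\<in>M. aend e \<in> X \<and> bend e \<in> X}"
  define m1 where "m1 = {e\<in>M. aend e \<in> X \<and> bend e \<notin> X}"
  define m2 where "m2 = {e\<in>M. aend e \<notin> X \<and> bend e \<in> X}"
  have "{e\<in>M. aend e \<in> X \<inter> A} = m0 \<union> m1" unfolding m0_def m1_def using ME ab_ends by auto
  moreover have "card (m0 \<union> m1) = card m0 + card m1" unfolding m0_def m1_def using fM
    by (subst card_Un_disjoint) auto
  ultimately have cA: "card (X \<inter> A) = card m0 + card m1" using sumA[OF ME, of "X \<inter> A"] sA by simp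
  have "{e\<in>M. bend e \<in> X \<inter> B} = m0 \<union> m2" unfolding m0_def m2_def using ME ab_ends by auto
  moreover have "card (m0 \<union> m2) = card m0 + card m2" unfolding m0_def m2_def using fM
    by (subst card_Un_disjoint) auto
  ultimately have cB: "card (X \<inter> B) = card m0 + card m2" using sumB[OF ME, of "X \<inter> B"] sB by simp
  have "cut H X \<inter> M = m1 \<union> m2" unfolding m1_def m2_def using ME cut_char0 by auto
  moreover have "card (m1 \<union> m2) = card m1 + card m2" unfolding m1_def m2_def using fM
    by (subst card_Un_disjoint) auto
  moreover have "card (cut H X \<inter> M) = 1" using tight assms unfolding tight_cut_def by auto
  ultimately have "card m1 + card m2 = 1" by simp
  then have "card m1 = 0" "card m2 = 1" using cA cB lt by auto
  then show "card (X \<inter> B) = card (X \<inter> A) + 1" using cA cB by simp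
  have "m1 = {}" using \<open>card m1 = 0\<close> fM unfolding m1_def by simp
  then show "\<forall>e\<in>M. \<not> (aend e \<in> X \<and> bend e \<notin> X)" unfolding m1_def by auto
qed

lemma T2: "e \<in> edges H \<Longrightarrow> \<not> (aend e \<in> X \<and> bend e \<notin> X)"
  using edge_in_pm pm_facts(2) by blast

lemma T1: "card (X \<inter> B) = card (X \<inter> A) + 1"
proof -
  have "X \<inter> B \<noteq> {}" using lt by auto
  then obtain w where w: "w \<in> X \<inter> B" by auto
  then have "deg H (edges H) w = 3" using deg3 XV by auto
  then have "{e \<in> edges H. w \<in> ends H e} \<noteq> {}" unfolding deg_def by (metis card.empty zero_neq_numeral)
  then obtain e where "e \<in> edges H" by auto
  then obtain M where "perfect_matching H M" using edge_in_pm by blast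
  then show ?thesis using pm_facts(1) by blast
qed

lemma cut_char: "e \<in> edges H \<Longrightarrow> e \<in> cut H X \<longleftrightarrow> aend e \<notin> X \<and> bend e \<in> X"
  using cut_char0 T2 by blast

lemma cutE: "cut H X \<subseteq> edges H" unfolding cut_def by auto

lemma key:
  assumes FE: "F \<subseteq> edges H"
  shows "(\<Sum>v\<in>X \<inter> B. deg H F v) = (\<Sum>v\<in>X \<inter> A. deg H F v) + card (F \<inter> cut H X)"
proof -
  have fF: "finite F" using FE fin(2) finite_subset by auto
  have "{e\<in>F. bend e \<in> X \<inter> B} = {e\<in>F. aend e \<in> X \<inter> A} \<union> (F \<inter> cut H X)"
    using FE ab_ends T2 cut_char by blast
  moreover have "card ({e\<in>F. aend e \<in> X \<inter> A} \<union> (F \<inter> cut H X)) =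
     card {e\<in>F. aend e \<in> X \<inter> A} + card (F \<inter> cut H X)"
    using fF FE cut_char by (subst card_Un_disjoint) auto
  ultimately show ?thesis using sumA[OF FE, of "X \<inter> A"] sumB[OF FE, of "X \<inter> B"] by simp
qed

lemma cardC: "card (cut H X) = 3"
  using key[of "edges H"] deg3 XV T1 cutE
  by (simp add: Int_absorb1 subset_eq)

end



context cbX begin

abbreviation "H1 \<equiv> shrink H Y"
abbreviation "H2 \<equiv> shrink H X"
abbreviation "C \<equiv> cut H X"

lemma XY: "X \<inter> Y = {}" "X \<union> Y = verts H" unfolding Y_def using XV by auto

lemma E1: "edges H1 \<subseteq> edges H" "edges H2 \<subseteq> edges H" unfolding shrink_simps by auto

lemma cutY: "e \<in> edges H \<Longrightarrow> (\<not> ends H e \<subseteq> Y \<and> ends H e \<inter> Y \<noteq> {}) \<longleftrightarrow> e \<in> C"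
  using ends_facts cut_char0 by blast
lemma cutX: "e \<in> edges H \<Longrightarrow> (\<not> ends H e \<subseteq> X \<and> ends H e \<inter> X \<noteq> {}) \<longleftrightarrow> e \<in> C"
  using ends_facts cut_char0 by blast

lemma None1: "F \<subseteq> edges H1 \<Longrightarrow> deg H1 F None = card (F \<inter> C)"
  unfolding deg_shrink_None
  by (rule arg_cong[where f=card]) (use cutY in \<open>auto simp: shrink_simps\<close>)
lemma None2: "F \<subseteq> edges H2 \<Longrightarrow> deg H2 F None = card (F \<inter> C)"
  unfolding deg_shrink_None
  by (rule arg_cong[where f=card]) (use cutX in \<open>auto simp: shrink_simps\<close>)

lemma restr1: "F \<subseteq> edges H \<Longrightarrow> v \<in> X \<Longrightarrow> deg H1 (F \<inter> edges H1) (Some v) = deg H F v"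
  using deg_shrink_Some deg_restrict XY by (metis disjoint_iff)
lemma restr2: "F \<subseteq> edges H \<Longrightarrow> v \<in> Y \<Longrightarrow> deg H2 (F \<inter> edges H2) (Some v) = deg H F v"
  using deg_shrink_Some deg_restrict XY by (metis disjoint_iff)

lemma restrC1: "F \<subseteq> edges H \<Longrightarrow> (F \<inter> edges H1) \<inter> C = F \<inter> C"
  using cutY cutE unfolding shrink_simps by blast
lemma restrC2: "F \<subseteq> edges H \<Longrightarrow> (F \<inter> edges H2) \<inter> C = F \<inter> C"
  using cutX cutE unfolding shrink_simps by blast

lemma glue:
  assumes F1: "F1 \<subseteq> edges H1" and F2: "F2 \<subseteq> edges H2" and eq: "F1 \<inter> C = F2 \<inter> C"
  shows "v \<in> X \<Longrightarrow> deg H (F1 \<union> F2) v = deg H1 F1 (Some v)"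
    "v \<in> Y \<Longrightarrow> deg H (F1 \<union> F2) v = deg H2 F2 (Some v)"
proof -
  assume v: "v \<in> X"
  then have "v \<notin> Y" using XY by auto
  have "{e\<in>F1 \<union> F2. v \<in> ends H e} = {e\<in>F1. v \<in> ends H e}"
  proof -
    have "e \<in> F1" if "e \<in> F2" "v \<in> ends H e" for e
    proof -
      have "e \<in> edges H" "\<not> ends H e \<subseteq> X" using that F2 unfolding shrink_simps by auto
      then have "e \<in> C" using cutX v that(2) by blast
      then show ?thesis using eq that(1) by blast
    qed
    then show ?thesis by blast
  qed
  then show "deg H (F1 \<union> F2) v = deg H1 F1 (Some v)"
    using deg_shrink_Some[where v=v and S=Y and H=H and F=F1, OF \<open>v \<notin> Y\<close>] unfolding deg_def by simp
next
  assume v: "v \<in> Y"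
  then have "v \<notin> X" using XY by auto
  have "{e\<in>F1 \<union> F2. v \<in> ends H e} = {e\<in>F2. v \<in> ends H e}"
  proof -
    have "e \<in> F2" if "e \<in> F1" "v \<in> ends H e" for e
    proof -
      have "e \<in> edges H" "\<not> ends H e \<subseteq> Y" using that F1 unfolding shrink_simps by auto
      then have "e \<in> C" using cutY v that(2) by blast
      then show ?thesis using eq that(1) by blast
    qed
    then show ?thesis by blast
  qed
  then show "deg H (F1 \<union> F2) v = deg H2 F2 (Some v)"
    using deg_shrink_Some[where v=v and S=X and H=H and F=F2, OF \<open>v \<notin> X\<close>] unfolding deg_def by simp
qed

lemma lm_sums:
  assumes "lambda_matching H a b F" "a \<noteq> b"
  shows "card (X \<inter> B) + 2 * card (X \<inter> B \<inter> {a, b}) =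
         card (X \<inter> A) + 2 * card (X \<inter> A \<inter> {a, b}) + card (F \<inter> C)"
proof -
  have FE: "F \<subseteq> edges H" and d: "deg H F a = 3" "deg H F b = 3"
    and d1: "\<forall>v\<in>verts H - {a, b}. deg H F v = 1"
    using assms unfolding lambda_matching_def by auto
  have "(\<Sum>v\<in>X \<inter> A. deg H F v) = card (X \<inter> A) + 2 * card (X \<inter> A \<inter> {a, b})"
    by (rule sum_deg) (use fin XV d d1 in auto)
  moreover have "(\<Sum>v\<in>X \<inter> B. deg H F v) = card (X \<inter> B) + 2 * card (X \<inter> B \<inter> {a, b})"
    by (rule sum_deg) (use fin XV d d1 in auto)
  ultimately show ?thesis using key[OF FE] by simp
qed

lemma vH1: "verts H1 = Some ` X \<union> {None}" unfolding shrink_simps Y_def using XV by auto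
lemma vH2: "verts H2 = Some ` Y \<union> {None}" unfolding shrink_simps Y_def by auto

lemma part1: "a \<in> X \<inter> A \<Longrightarrow> b \<in> Y \<inter> B \<Longrightarrow> \<not> lambda_matchable H a b"
proof
  assume a: "a \<in> X \<inter> A" and b: "b \<in> Y \<inter> B" and "lambda_matchable H a b"
  then obtain F where F: "lambda_matching H a b F" unfolding lambda_matchable_def by auto
  have ne: "a \<noteq> b" using a b XY AB(2) by auto
  have "X \<inter> A \<inter> {a, b} = {a}" using a b XY AB(2) by auto
  moreover have "X \<inter> B \<inter> {a, b} = {}" using a b XY AB(2) by auto
  ultimately show False using lm_sums[OF F ne] T1 by simp
qed

end



context cbX begin

lemma fC: "finite C" using cutE fin(2) finite_subset by auto

lemma part2:
  assumes a: "a \<in> X \<inter> A" and b: "b \<in> X \<inter> B"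
  shows "lambda_matchable H a b \<longleftrightarrow> lambda_matchable H1 (Some a) (Some b)"
proof
  have ne: "a \<noteq> b" using a b AB(2) by auto
  have aY: "a \<notin> Y" "b \<notin> Y" using a b XY by auto
  assume "lambda_matchable H a b"
  then obtain F where F: "lambda_matching H a b F" unfolding lambda_matchable_def by auto
  have FE: "F \<subseteq> edges H" and d: "deg H F a = 3" "deg H F b = 3"
    and d1: "\<forall>v\<in>verts H - {a, b}. deg H F v = 1"
    using F unfolding lambda_matching_def by auto
  have "X \<inter> A \<inter> {a, b} = {a}" "X \<inter> B \<inter> {a, b} = {b}" using a b AB(2) by auto
  then have cFC: "card (F \<inter> C) = 1" using lm_sums[OF F ne] T1 by simp
  define F1 where "F1 = F \<inter> edges H1"
  have "lambda_matching H1 (Some a) (Some b) F1"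
    unfolding lambda_matching_def
  proof (intro conjI ballI)
    show "F1 \<subseteq> edges H1" unfolding F1_def by auto
    show "deg H1 F1 (Some a) = 3" using restr1[OF FE] a d unfolding F1_def by auto
    show "deg H1 F1 (Some b) = 3" using restr1[OF FE] b d unfolding F1_def by auto
    fix w assume w: "w \<in> verts H1 - {Some a, Some b}"
    show "deg H1 F1 w = 1"
    proof (cases w)
      case None
      then show ?thesis using None1[of F1] restrC1[OF FE] cFC unfolding F1_def by simp
    next
      case (Some v)
      then have "v \<in> X" "v \<noteq> a" "v \<noteq> b" using w vH1 by auto
      then show ?thesis using Some restr1[OF FE] d1 XV unfolding F1_def by auto
    qed
  qed
  then show "lambda_matchable H1 (Some a) (Some b)" unfolding lambda_matchable_def by auto
next
  have ne: "a \<noteq> b" using a b AB(2) by auto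
  assume "lambda_matchable H1 (Some a) (Some b)"
  then obtain F1 where F1: "lambda_matching H1 (Some a) (Some b) F1" unfolding lambda_matchable_def by auto
  have F1E: "F1 \<subseteq> edges H1" and d: "deg H1 F1 (Some a) = 3" "deg H1 F1 (Some b) = 3"
    and d1: "\<forall>w\<in>verts H1 - {Some a, Some b}. deg H1 F1 w = 1"
    using F1 unfolding lambda_matching_def by auto
  have "deg H1 F1 None = 1" using d1 vH1 by auto
  then have "card (F1 \<inter> C) = 1" using None1[OF F1E] by simp
  then obtain e0 where e0: "F1 \<inter> C = {e0}" using card_1_singletonE by blast
  then have e0E: "e0 \<in> edges H" using cutE by auto
  obtain M where M: "perfect_matching H M" "e0 \<in> M" using edge_in_pm[OF e0E] by blast
  have ME: "M \<subseteq> edges H" and dM: "\<forall>v\<in>verts H. deg H M v = 1"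
    using M unfolding perfect_matching_def by auto
  have "card (C \<inter> M) = 1" using tight M unfolding tight_cut_def by auto
  moreover have "e0 \<in> C \<inter> M" using e0 M by auto
  ultimately have MC: "M \<inter> C = {e0}" by (metis Int_commute card_1_singletonE singletonD)
  define F2 where "F2 = M \<inter> edges H2"
  have F2E: "F2 \<subseteq> edges H2" unfolding F2_def by auto
  have eq: "F1 \<inter> C = F2 \<inter> C" using e0 MC restrC2[OF ME] unfolding F2_def by simp
  define F where "F = F1 \<union> F2"
  have "lambda_matching H a b F"
    unfolding lambda_matching_def
  proof (intro conjI ballI)
    show "F \<subseteq> edges H" unfolding F_def using F1E F2E E1 by auto
    show "deg H F a = 3" using glue(1)[OF F1E F2E eq] a d unfolding F_def by auto
    show "deg H F b = 3" using glue(1)[OF F1E F2E eq] b d unfolding F_def by auto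
    fix v assume v: "v \<in> verts H - {a, b}"
    show "deg H F v = 1"
    proof (cases "v \<in> X")
      case True
      then have "Some v \<in> verts H1 - {Some a, Some b}" using v vH1 by auto
      then show ?thesis using glue(1)[OF F1E F2E eq True] d1 unfolding F_def by auto
    next
      case False
      then have vY: "v \<in> Y" using v XY by auto
      then show ?thesis using glue(2)[OF F1E F2E eq vY] restr2[OF ME vY] dM v unfolding F_def F2_def by auto
    qed
  qed
  then show "lambda_matchable H a b" unfolding lambda_matchable_def by auto
qed

lemma part3:
  assumes a: "a \<in> Y \<inter> A" and b: "b \<in> X \<inter> B"
  shows "lambda_matchable H a b \<longleftrightarrow>
    (lambda_matchable H1 None (Some b) \<and> lambda_matchable H2 (Some a) None)"
proof
  have ne: "a \<noteq> b" using a b AB(2) by auto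
  assume "lambda_matchable H a b"
  then obtain F where F: "lambda_matching H a b F" unfolding lambda_matchable_def by auto
  have FE: "F \<subseteq> edges H" and d: "deg H F a = 3" "deg H F b = 3"
    and d1: "\<forall>v\<in>verts H - {a, b}. deg H F v = 1"
    using F unfolding lambda_matching_def by auto
  have "X \<inter> A \<inter> {a, b} = {}" "X \<inter> B \<inter> {a, b} = {b}" using a b AB(2) XY by auto
  then have cFC: "card (F \<inter> C) = 3" using lm_sums[OF F ne] T1 by simp
  define F1 where "F1 = F \<inter> edges H1"
  have "lambda_matching H1 None (Some b) F1"
    unfolding lambda_matching_def
  proof (intro conjI ballI)
    show "F1 \<subseteq> edges H1" unfolding F1_def by auto
    show "deg H1 F1 None = 3" using None1[of F1] restrC1[OF FE] cFC unfolding F1_def by simp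
    show "deg H1 F1 (Some b) = 3" using restr1[OF FE] b d unfolding F1_def by auto
    fix w assume w: "w \<in> verts H1 - {None, Some b}"
    then obtain v where v: "w = Some v" "v \<in> X" "v \<noteq> b" using vH1 by auto
    then have "v \<noteq> a" using a XY by auto
    then show "deg H1 F1 w = 1" using v restr1[OF FE] d1 XV unfolding F1_def by auto
  qed
  moreover define F2 where "F2 = F \<inter> edges H2"
  have "lambda_matching H2 (Some a) None F2"
    unfolding lambda_matching_def
  proof (intro conjI ballI)
    show "F2 \<subseteq> edges H2" unfolding F2_def by auto
    show "deg H2 F2 None = 3" using None2[of F2] restrC2[OF FE] cFC unfolding F2_def by simp
    show "deg H2 F2 (Some a) = 3" using restr2[OF FE] a d unfolding F2_def by auto
    fix w assume w: "w \<in> verts H2 - {Some a, None}"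
    then obtain v where v: "w = Some v" "v \<in> Y" "v \<noteq> a" using vH2 by auto
    then have "v \<noteq> b" "v \<in> verts H" using b XY by auto
    then show "deg H2 F2 w = 1" using v restr2[OF FE] d1 unfolding F2_def by auto
  qed
  ultimately show "lambda_matchable H1 None (Some b) \<and> lambda_matchable H2 (Some a) None"
    unfolding lambda_matchable_def by auto
next
  have ne: "a \<noteq> b" using a b AB(2) by auto
  assume "lambda_matchable H1 None (Some b) \<and> lambda_matchable H2 (Some a) None"
  then obtain F1 F2 where F1: "lambda_matching H1 None (Some b) F1"
    and F2: "lambda_matching H2 (Some a) None F2" unfolding lambda_matchable_def by auto
  have F1E: "F1 \<subseteq> edges H1" and d1a: "deg H1 F1 None = 3" "deg H1 F1 (Some b) = 3"
    and d1: "\<forall>w\<in>verts H1 - {None, Some b}. deg H1 F1 w = 1"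
    using F1 unfolding lambda_matching_def by auto
  have F2E: "F2 \<subseteq> edges H2" and d2a: "deg H2 F2 None = 3" "deg H2 F2 (Some a) = 3"
    and d2: "\<forall>w\<in>verts H2 - {Some a, None}. deg H2 F2 w = 1"
    using F2 unfolding lambda_matching_def by auto
  have "card (F1 \<inter> C) = card C" using None1[OF F1E] d1a cardC by simp
  then have c1: "F1 \<inter> C = C" using card_subset_eq[OF fC, of "F1 \<inter> C"] by auto
  have "card (F2 \<inter> C) = card C" using None2[OF F2E] d2a cardC by simp
  then have c2: "F2 \<inter> C = C" using card_subset_eq[OF fC, of "F2 \<inter> C"] by auto
  have eq: "F1 \<inter> C = F2 \<inter> C" using c1 c2 by simp
  define F where "F = F1 \<union> F2"
  have "lambda_matching H a b F"
    unfolding lambda_matching_def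
  proof (intro conjI ballI)
    show "F \<subseteq> edges H" unfolding F_def using F1E F2E E1 by auto
    show "deg H F a = 3" using glue(2)[OF F1E F2E eq] a d2a unfolding F_def by auto
    show "deg H F b = 3" using glue(1)[OF F1E F2E eq] b d1a unfolding F_def by auto
    fix v assume v: "v \<in> verts H - {a, b}"
    show "deg H F v = 1"
    proof (cases "v \<in> X")
      case True
      then have "Some v \<in> verts H1 - {None, Some b}" using v vH1 by auto
      then show ?thesis using glue(1)[OF F1E F2E eq True] d1 unfolding F_def by auto
    next
      case False
      then have vY: "v \<in> Y" using v XY by auto
      then have "Some v \<in> verts H2 - {Some a, None}" using v vH2 by auto
      then show ?thesis using glue(2)[OF F1E F2E eq vY] d2 unfolding F_def by auto
    qed
  qed
  then show "lambda_matchable H a b" unfolding lambda_matchable_def by auto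
qed

end


theorem lemma2p2:
  fixes H :: "('v, 'e) mgraph" and A B X :: "'v set"
  assumes "multigraph H" and "connected_graph H" and "cubic H"
    and "bipartite_on H A B"
    and "tight_cut H X"
    and "card (X \<inter> A) < card (X \<inter> B)"
  shows "(\<forall>a\<in>X \<inter> A. \<forall>b\<in>(verts H - X) \<inter> B. \<not> lambda_matchable H a b)
    \<and> (\<forall>a\<in>X \<inter> A. \<forall>b\<in>X \<inter> B.
          lambda_matchable H a b \<longleftrightarrow>
          lambda_matchable (shrink H (verts H - X)) (Some a) (Some b))
    \<and> (\<forall>a\<in>(verts H - X) \<inter> A. \<forall>b\<in>X \<inter> B.
          lambda_matchable H a b \<longleftrightarrow>
          (lambda_matchable (shrink H (verts H - X)) None (Some b) \<and>
           lambda_matchable (shrink H X) (Some a) None))"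
proof -
  interpret cbX H A B X
    using assms by unfold_locales auto
  show ?thesis unfolding Y_def[symmetric] using part1 part2 part3 by blast
qed

end
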